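(* Let $i$ be a nonempty word in the letters $\{0,1\}$ whose last letter is $1$, and let $0<x<1$, $0<y<1$. Then \begin{align*} L_{[x^{-1}\,|\,i]}(y) &= \sum_{[a|b]=[i]} (-1)^{w(a)-l(a)} \sum_{\epsilon\in\{0,1\}^{l(a)}} L_{[a(\epsilon)\,|\,y^{-1}]}(x)\, L_{[b]}(y)\\ &\qquad - \sum_{\substack{[a|b]=[i]\\ b \text{ nonempty},\ b_1=1}} (-1)^{w(a)-l(a)} \sum_{\epsilon\in\{0,1\}^{l(a)}} L_{[a(\epsilon)\,|\,1]}(x)\, L_{[b]}(y). \end{align*} In particular (letting $y\to 1^-$), \[ L_{[x^{-1}\,|\,i]}(1) = \sum_{\substack{[a|b]=[i]\\ b \text{ empty or } b_1=0}} (-1)^{w(a)-l(a)} \sum_{\epsilon\in\{0,1\}^{l(a)}} L_{[a(\epsilon)\,|\,1]}(x)\, L_{[b]}(1). \]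
   Context: Hyperlogarithms: for a word $w=[\sigma_1|\sigma_2|\dots|\sigma_n]$ in letters $\sigma_j\in\mathbb{C}$ with last letter $\sigma_n\neq 0$, define $L_{[\,]}(z)=1$ and recursively $L_{[\sigma_1|\sigma_2|\dots|\sigma_n]}(z)=\int_0^z \omega_{\sigma_1}(t)\,L_{[\sigma_2|\dots|\sigma_n]}(t)$, where $\omega_0=dt/t$ and $\omega_\sigma=dt/(\sigma-t)$ for $\sigma\neq 0$ (so the letter $1$ corresponds to $dt/(1-t)$, and a letter $x^{-1}$ to $dt/(x^{-1}-t)$). For a word $a$ in $\{0,1\}$, $w(a)$ (weight) is its number of letters and $l(a)$ (length) is its number of letters equal to $1$; $a_k$ denotes its $k$-th letter. The notation $[a|b]=[i]$ means $i$ is the concatenation of the (possibly empty) words $a$ and $b$, and $[a|\sigma]$ denotes the word $a$ followed by the letter $\sigma$. For a word $a$ in $\{0,1\}$ whose letters equal to $1$ are at positions $p_1<\dots<p_{l(a)}$ and $\epsilon=(\epsilon_1,\dots,\epsilon_{l(a)})\in\{0,1\}^{l(a)}$, $a(\epsilon)$ is the word obtained from $a$ by replacing the letter at position $p_j$ by $\epsilon_j$ for each $j$ (all other letters stay $0$). *)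

theory Defs
  imports "HOL-Analysis.Analysis"
begin

definition omega :: "real \<Rightarrow> real \<Rightarrow> real" where
  "omega s t = (if s = 0 then 1 / t else 1 / (s - t))"

text \<open>Hyperlogarithm L_w(z), iterated integral along the segment [0,z] of the real line
  (letters and argument real; this covers all instances used).\<close>
fun hlog :: "real list \<Rightarrow> real \<Rightarrow> real" where
  "hlog [] z = 1"
| "hlog (s # w) z = integral {0..z} (\<lambda>t. omega s t * hlog w t)"

text \<open>Length l(a): number of letters equal to 1.\<close>
definition ones :: "real list \<Rightarrow> nat" where
  "ones a = length (filter (\<lambda>c. c = 1) a)"

fun subst_ones :: "real list \<Rightarrow> real list \<Rightarrow> real list" where
  "subst_ones [] e = []"
| "subst_ones (c # a) e =
     (if c = 1 then hd e # subst_ones a (tl e) else c # subst_ones a e)"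

definition eps_set :: "nat \<Rightarrow> real list set" where
  "eps_set n = {e. length e = n \<and> set e \<subseteq> {0, 1}}"

definition inner_sum :: "real list \<Rightarrow> real \<Rightarrow> real \<Rightarrow> real" where
  "inner_sum a s x = (-1) ^ (length a - ones a) *
      (\<Sum>e\<in>eps_set (ones a). hlog (subst_ones a e @ [s]) x)"

end

theory Submission
  imports Defs
begin


definition good :: "real list \<Rightarrow> bool" where
  "good w \<longleftrightarrow> (\<forall>c\<in>set w. c = 0 \<or> 1 \<le> c) \<and> (w \<noteq> [] \<longrightarrow> last w \<noteq> 0)"

lemma good_tl: "good (c # w) \<Longrightarrow> good w"
  unfolding good_def by auto

lemma good_hd: "good (c # w) \<Longrightarrow> c = 0 \<or> 1 \<le> c"
  unfolding good_def by auto

lemma good_0: "good (0 # w) \<Longrightarrow> w \<noteq> []"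
  unfolding good_def by auto

lemma cont_from_closed:
  fixes h :: "real \<Rightarrow> real"
  assumes "\<And>b. 0 \<le> b \<Longrightarrow> b < 1 \<Longrightarrow> continuous_on {0..b} h"
  shows "continuous_on {0..<1} h"
  unfolding continuous_on_def
proof
  fix x :: real assume x: "x \<in> {0..<1}"
  define b where "b = (x + 1) / 2"
  have b: "0 \<le> b" "b < 1" "x < b" using x by (auto simp: b_def)
  have "(h \<longlongrightarrow> h x) (at x within {0..b})"
    using assms[OF b(1,2)] x b unfolding continuous_on_def by auto
  moreover have "at x within {0..<1} = at x within {0..b}"
    by (rule at_within_nhd[of x "{..<b}"]) (use b in auto)
  ultimately show "(h \<longlongrightarrow> h x) (at x within {0..<1})" by simp
qed

lemma omega_cont:
  assumes "c = 0 \<or> 1 \<le> c"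
  shows "continuous_on {0<..<1} (omega c)"
proof (cases "c = 0")
  case True
  then show ?thesis unfolding omega_def by (auto intro!: continuous_intros)
next
  case False
  then show ?thesis unfolding omega_def using assms by (auto intro!: continuous_intros)
qed

lemma omega_bound:
  assumes "1 \<le> c" "0 \<le> u" "u < 1"
  shows "0 \<le> omega c u" "omega c u \<le> 1 / (1 - u)"
  using assms unfolding omega_def by (auto simp: divide_simps)

definition gb :: "real \<Rightarrow> real" where "gb u = 1 / ((1 - u) * sqrt (1 - u))"

lemma gb_pos: "u < 1 \<Longrightarrow> 0 < gb u"
  unfolding gb_def by auto

lemma gb_cont: "b < 1 \<Longrightarrow> continuous_on {0..b} gb"
  unfolding gb_def by (auto intro!: continuous_intros)

lemma gb_integral:
  assumes "0 \<le> t" "t < 1"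
  shows "(gb has_integral (2 / sqrt (1 - t) - 2)) {0..t}"
proof -
  have "(gb has_integral ((\<lambda>u. 2 / sqrt (1 - u)) t - (\<lambda>u. 2 / sqrt (1 - u)) 0)) {0..t}"
  proof (rule fundamental_theorem_of_calculus)
    show "0 \<le> t" by fact
    fix x assume x: "x \<in> {0..t}"
    then have x1: "x < 1" using assms by auto
    have "((\<lambda>u. 2 / sqrt (1 - u)) has_real_derivative gb x) (at x)"
      using x1 unfolding gb_def
      by (auto intro!: derivative_eq_intros simp: divide_simps power2_eq_square)
    then show "((\<lambda>u. 2 / sqrt (1 - u)) has_vector_derivative gb x) (at x within {0..t})"
      by (simp add: has_real_derivative_iff_has_vector_derivative has_vector_derivative_at_within)
  qed
  then show ?thesis by simp
qed

lemma gb_final: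
  assumes "0 \<le> t" "t < 1"
  shows "2 / sqrt (1 - t) - 2 \<le> 2 * t / sqrt (1 - t)"
proof -
  define s where "s = sqrt (1 - t)"
  have s: "0 < s" "s \<le> 1" "s * s = 1 - t" using assms by (auto simp: s_def)
  have "s * s \<le> s * 1" using s by (intro mult_left_mono) auto
  then have "2 - 2 * s \<le> 2 * t" using s by linarith
  then show ?thesis using s unfolding s_def[symmetric] by (simp add: divide_simps)
qed

lemma integrable_from:
  fixes f :: "real \<Rightarrow> real"
  assumes cf: "continuous_on {0<..<1} f" and bd: "\<And>u. 0 \<le> u \<Longrightarrow> u < 1 \<Longrightarrow> \<bar>f u\<bar> \<le> K * gb u"
    and b: "0 \<le> b" "b < 1"
  shows "f integrable_on {0..b}"
proof -
  have "f integrable_on {0<..<b}"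
  proof (rule measurable_bounded_by_integrable_imp_integrable)
    show "f \<in> borel_measurable (lebesgue_on {0<..<b})"
      by (rule continuous_imp_measurable_on_sets_lebesgue) (use b in \<open>auto intro: continuous_on_subset[OF cf]\<close>)
    have "(\<lambda>u. K * gb u) integrable_on {0..b}"
      by (intro integrable_continuous_real continuous_intros gb_cont b)
    then show "(\<lambda>u. K * gb u) integrable_on {0<..<b}"
      by (simp add: integrable_on_open_interval_real)
    show "norm (f u) \<le> K * gb u" if "u \<in> {0<..<b}" for u
      using bd[of u] that b by auto
    show "{0<..<b} \<in> sets lebesgue" by simp
  qed
  then show ?thesis by (simp add: integrable_on_open_interval_real)
qed

lemma integral_bound_from:
  fixes f :: "real \<Rightarrow> real"
  assumes cf: "continuous_on {0<..<1} f" and bd: "\<And>u. 0 \<le> u \<Longrightarrow> u < 1 \<Longrightarrow> \<bar>f u\<bar> \<le> K * gb u"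
    and t: "0 \<le> t" "t < 1" and K: "0 \<le> K"
  shows "\<bar>integral {0..t} f\<bar> \<le> (2 * K) * t / sqrt (1 - t)"
proof -
  have "norm (integral {0..t} f) \<le> integral {0..t} (\<lambda>u. K * gb u)"
    by (rule integral_norm_bound_integral)
       (use integrable_from[OF cf bd t] t bd in \<open>auto intro!: integrable_continuous_real continuous_intros gb_cont\<close>)
  also have "\<dots> = K * (2 / sqrt (1 - t) - 2)"
    using gb_integral[OF t] by (simp add: integral_unique)
  also have "\<dots> \<le> K * (2 * t / sqrt (1 - t))"
    by (intro mult_left_mono gb_final t K)
  finally show ?thesis by (simp add: ac_simps)
qed

lemma integrand_props:
  assumes good: "good (c # w)"
    and contw: "\<And>b. 0 \<le> b \<Longrightarrow> b < 1 \<Longrightarrow> continuous_on {0..b} (hlog w)"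
    and bndw: "w \<noteq> [] \<Longrightarrow> \<exists>K\<ge>0. \<forall>u. 0 \<le> u \<and> u < 1 \<longrightarrow> \<bar>hlog w u\<bar> \<le> K * u / sqrt (1 - u)"
  shows "\<exists>K\<ge>0. \<forall>u. 0 \<le> u \<and> u < 1 \<longrightarrow> \<bar>omega c u * hlog w u\<bar> \<le> K * gb u"
    and "continuous_on {0<..<1} (\<lambda>u. omega c u * hlog w u)"
proof -
  have c: "c = 0 \<or> 1 \<le> c" using good_hd[OF good] .
  have cw: "continuous_on {0<..<1} (hlog w)"
    by (rule continuous_on_subset[OF cont_from_closed[OF contw]]) auto
  show "continuous_on {0<..<1} (\<lambda>u. omega c u * hlog w u)"
    by (intro continuous_intros omega_cont[OF c] cw)
  show "\<exists>K\<ge>0. \<forall>u. 0 \<le> u \<and> u < 1 \<longrightarrow> \<bar>omega c u * hlog w u\<bar> \<le> K * gb u"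
  proof (cases "w = []")
    case True
    then have c1: "1 \<le> c" using good good_0 c by blast
    show ?thesis
    proof (intro exI[of _ 1] conjI allI impI)
      fix u :: real assume u: "0 \<le> u \<and> u < 1"
      have "\<bar>omega c u * hlog w u\<bar> = omega c u" using True omega_bound[OF c1] u by simp
      also have "\<dots> \<le> 1 / (1 - u)" using omega_bound[OF c1] u by simp
      also have "\<dots> \<le> gb u" unfolding gb_def using u
        by (auto simp: divide_simps real_sqrt_le_1_iff)
      finally show "\<bar>omega c u * hlog w u\<bar> \<le> 1 * gb u" by simp
    qed simp
  next
    case False
    then obtain K where K: "0 \<le> K" "\<And>u. 0 \<le> u \<Longrightarrow> u < 1 \<Longrightarrow> \<bar>hlog w u\<bar> \<le> K * u / sqrt (1 - u)"
      using bndw by blast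
    show ?thesis
    proof (intro exI[of _ K] conjI allI impI)
      fix u :: real assume u: "0 \<le> u \<and> u < 1"
      have sq: "0 < sqrt (1 - u)" "sqrt (1 - u) \<le> 1" using u by auto
      show "\<bar>omega c u * hlog w u\<bar> \<le> K * gb u"
      proof (cases "c = 0")
        case True
        show ?thesis
        proof (cases "u = 0")
          case True
          then show ?thesis using \<open>c = 0\<close> K gb_pos[of 0] by (simp add: omega_def)
        next
          case False
          then have up: "0 < u" using u by auto
          have "\<bar>omega c u * hlog w u\<bar> = \<bar>hlog w u\<bar> / u" using \<open>c = 0\<close> up by (simp add: omega_def abs_mult)
          also have "\<dots> \<le> (K * u / sqrt (1 - u)) / u" using divide_right_mono[OF K(2)[of u], of u] u up by simp
          also have "\<dots> = K / sqrt (1 - u)" using up by simp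
          also have "\<dots> \<le> K * gb u" unfolding gb_def using u sq K(1)
            by (auto simp: divide_simps mult_left_le)
          finally show ?thesis .
        qed
      next
        case False
        then have c1: "1 \<le> c" using c by auto
        have "\<bar>omega c u * hlog w u\<bar> = omega c u * \<bar>hlog w u\<bar>" using omega_bound[OF c1] u by (simp add: abs_mult)
        also have "\<dots> \<le> (1 / (1 - u)) * (K * u / sqrt (1 - u))"
          using omega_bound[OF c1] u K(2)[of u] by (intro mult_mono) auto
        also have "\<dots> \<le> K * gb u" unfolding gb_def using u sq K(1)
          by (auto simp: divide_simps mult_left_le)
        finally show ?thesis .
      qed
    qed (use K in simp)
  qed
qed

lemma hlog_Cons_fun: "hlog (c # w) = (\<lambda>t. integral {0..t} (\<lambda>u. omega c u * hlog w u))"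
  by (rule ext) simp

lemma reg:
  "good w \<Longrightarrow> (\<forall>b. 0 \<le> b \<and> b < 1 \<longrightarrow> continuous_on {0..b} (hlog w)) \<and>
     (w \<noteq> [] \<longrightarrow> (\<exists>K\<ge>0. \<forall>u. 0 \<le> u \<and> u < 1 \<longrightarrow> \<bar>hlog w u\<bar> \<le> K * u / sqrt (1 - u)))"
proof (induction w)
  case Nil
  then show ?case by (simp add: continuous_on_const)
next
  case (Cons c w)
  have gw: "good w" using good_tl[OF Cons.prems] .
  note IH = Cons.IH[OF gw]
  obtain K where K: "0 \<le> K" "\<And>u. 0 \<le> u \<Longrightarrow> u < 1 \<Longrightarrow> \<bar>omega c u * hlog w u\<bar> \<le> K * gb u"
    using integrand_props(1)[OF Cons.prems] IH by blast
  have cf: "continuous_on {0<..<1} (\<lambda>u. omega c u * hlog w u)"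
    using integrand_props(2)[OF Cons.prems] IH by blast
  show ?case
  proof (intro conjI allI impI)
    fix b :: real assume b: "0 \<le> b \<and> b < 1"
    show "continuous_on {0..b} (hlog (c # w))"
      unfolding hlog_Cons_fun
      by (rule indefinite_integral_continuous_1[OF integrable_from[OF cf K(2)]]) (use b in auto)
  next
    show "\<exists>K\<ge>0. \<forall>u. 0 \<le> u \<and> u < 1 \<longrightarrow> \<bar>hlog (c # w) u\<bar> \<le> K * u / sqrt (1 - u)"
      using integral_bound_from[OF cf K(2) _ _ K(1)] K(1) by (intro exI[of _ "2 * K"]) auto
  qed
qed

lemma hlog_cont: "good w \<Longrightarrow> 0 \<le> b \<Longrightarrow> b < 1 \<Longrightarrow> continuous_on {0..b} (hlog w)"
  using reg by blast

lemma hlog_bound: "good w \<Longrightarrow> w \<noteq> [] \<Longrightarrow>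
   \<exists>K\<ge>0. \<forall>u. 0 \<le> u \<and> u < 1 \<longrightarrow> \<bar>hlog w u\<bar> \<le> K * u / sqrt (1 - u)"
  using reg by blast

lemma integrand_bound:
  assumes "good (c # w)"
  shows "\<exists>K\<ge>0. \<forall>u. 0 \<le> u \<and> u < 1 \<longrightarrow> \<bar>omega c u * hlog w u\<bar> \<le> K * gb u"
  using integrand_props(1)[OF assms] hlog_cont[OF good_tl[OF assms]] hlog_bound[OF good_tl[OF assms]] by blast

lemma integrand_cont:
  assumes "good (c # w)"
  shows "continuous_on {0<..<1} (\<lambda>u. omega c u * hlog w u)"
  using integrand_props(2)[OF assms] hlog_cont[OF good_tl[OF assms]] hlog_bound[OF good_tl[OF assms]] by blast

lemma integrand_integrable:
  assumes "good (c # w)" "0 \<le> b" "b < 1"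
  shows "(\<lambda>u. omega c u * hlog w u) integrable_on {0..b}"
proof -
  obtain K where K: "0 \<le> K" "\<And>u. 0 \<le> u \<Longrightarrow> u < 1 \<Longrightarrow> \<bar>omega c u * hlog w u\<bar> \<le> K * gb u"
    using integrand_bound[OF assms(1)] by blast
  show ?thesis by (rule integrable_from[OF integrand_cont[OF assms(1)] K(2) assms(2,3)])
qed

lemma hlog_deriv:
  assumes g: "good (c # w)" and t: "0 < t" "t < 1"
  shows "(hlog (c # w) has_real_derivative omega c t * hlog w t) (at t)"
proof -
  define b where "b = (t + 1) / 2"
  have b: "0 \<le> b" "b < 1" "t < b" using t by (auto simp: b_def)
  have "isCont (\<lambda>u. omega c u * hlog w u) t"
    using continuous_on_interior[OF integrand_cont[OF g], of t] t by simp
  then have "((\<lambda>u. integral {0..u} (\<lambda>u. omega c u * hlog w u)) has_vector_derivative omega c t * hlog w t)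
      (at t within ({0..b} - {}))"
    by (intro integral_has_vector_derivative_continuous_at integrand_integrable[OF g b(1,2)])
       (use t b in \<open>auto intro: continuous_at_imp_continuous_within\<close>)
  then have "((\<lambda>u. integral {0..u} (\<lambda>u. omega c u * hlog w u)) has_vector_derivative omega c t * hlog w t) (at t)"
    using at_within_Icc_at[of 0 t b] t b by simp
  then show ?thesis unfolding hlog_Cons_fun has_real_derivative_iff_has_vector_derivative .
qed

lemma hlog_zero: "w \<noteq> [] \<Longrightarrow> hlog w 0 = 0"
  by (cases w) auto

lemma hlog_tendsto0:
  assumes "good w" "w \<noteq> []"
  shows "(hlog w \<longlongrightarrow> 0) (at_right 0)"
proof -
  have "(hlog w \<longlongrightarrow> hlog w 0) (at 0 within {0..1/2})"
    using hlog_cont[OF assms(1), of "1/2"] unfolding continuous_on_def by auto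
  moreover have "at (0::real) within {0<..} = at 0 within {0..1/2}"
    by (rule at_within_nhd[of 0 "{..<1/2}"]) auto
  ultimately show ?thesis using hlog_zero[OF assms(2)] by simp
qed

lemma isqrt_integrable: "(\<lambda>u. 1 / sqrt (1 - u)) integrable_on {0..1::real}"
proof -
  have "((\<lambda>u. 1 / sqrt (1 - u)) has_integral ((\<lambda>u. - 2 * sqrt (1 - u)) 1 - (\<lambda>u. - 2 * sqrt (1 - u)) 0)) {0..1::real}"
  proof (rule fundamental_theorem_of_calculus_interior)
    show "continuous_on {0..1} (\<lambda>u::real. - 2 * sqrt (1 - u))" by (intro continuous_intros)
    fix x :: real assume x: "x \<in> {0<..<1}"
    have "((\<lambda>u. - 2 * sqrt (1 - u)) has_real_derivative 1 / sqrt (1 - x)) (at x)"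
      using x by (auto intro!: derivative_eq_intros simp: divide_simps)
    then show "((\<lambda>u. - 2 * sqrt (1 - u)) has_vector_derivative 1 / sqrt (1 - x)) (at x)"
      by (simp add: has_real_derivative_iff_has_vector_derivative)
  qed simp
  then show ?thesis by blast
qed

lemma integrand_integrable01:
  assumes g: "good (c # w)" and c: "c = 0 \<or> 1 < c"
  shows "(\<lambda>u. omega c u * hlog w u) integrable_on {0..1}"
proof -
  have gw: "good w" using good_tl[OF g] .
  have "\<exists>K\<ge>0. \<forall>u. 0 < u \<and> u < 1 \<longrightarrow> \<bar>omega c u * hlog w u\<bar> \<le> K / sqrt (1 - u)"
  proof (cases "w = []")
    case True
    then have c1: "1 < c" using c good_0 g by auto
    show ?thesis
    proof (intro exI[of _ "1 / (c - 1)"] conjI allI impI)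
      fix u :: real assume u: "0 < u \<and> u < 1"
      have "\<bar>omega c u * hlog w u\<bar> = 1 / (c - u)" using True c1 u by (simp add: omega_def)
      also have "\<dots> \<le> 1 / (c - 1)" using u c1 by (simp add: divide_simps)
      also have "\<dots> \<le> (1 / (c - 1)) / sqrt (1 - u)" using u c1
        by (simp add: divide_simps real_sqrt_le_1_iff)
      finally show "\<bar>omega c u * hlog w u\<bar> \<le> 1 / (c - 1) / sqrt (1 - u)" .
    qed (use c1 in simp)
  next
    case False
    obtain K where K: "0 \<le> K" "\<And>u. 0 \<le> u \<Longrightarrow> u < 1 \<Longrightarrow> \<bar>hlog w u\<bar> \<le> K * u / sqrt (1 - u)"
      using hlog_bound[OF gw False] by blast
    show ?thesis
    proof (cases "c = 0")
      case True
      show ?thesis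
      proof (intro exI[of _ K] conjI allI impI)
        fix u :: real assume u: "0 < u \<and> u < 1"
        have "\<bar>omega c u * hlog w u\<bar> = \<bar>hlog w u\<bar> / u" using True u by (simp add: omega_def abs_mult)
        also have "\<dots> \<le> (K * u / sqrt (1 - u)) / u" using divide_right_mono[OF K(2)[of u], of u] u by simp
        also have "\<dots> = K / sqrt (1 - u)" using u by simp
        finally show "\<bar>omega c u * hlog w u\<bar> \<le> K / sqrt (1 - u)" .
      qed (use K in simp)
    next
      case False
      then have c1: "1 < c" using c by auto
      show ?thesis
      proof (intro exI[of _ "K / (c - 1)"] conjI allI impI)
        fix u :: real assume u: "0 < u \<and> u < 1"
        have "\<bar>omega c u * hlog w u\<bar> = (1 / (c - u)) * \<bar>hlog w u\<bar>" using c1 u by (simp add: omega_def abs_mult)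
        also have "\<dots> \<le> (1 / (c - 1)) * (K * u / sqrt (1 - u))"
          using u c1 K(2)[of u] by (intro mult_mono) (auto simp: divide_simps)
        also have "\<dots> \<le> (1 / (c - 1)) * (K / sqrt (1 - u))"
          using u c1 K(1) by (intro mult_left_mono) (auto simp: divide_simps mult_left_le)
        also have "\<dots> = K / (c - 1) / sqrt (1 - u)" by simp
        finally show "\<bar>omega c u * hlog w u\<bar> \<le> K / (c - 1) / sqrt (1 - u)" .
      qed (use K c1 in simp)
    qed
  qed
  then obtain K where K: "0 \<le> K" "\<And>u. 0 < u \<Longrightarrow> u < 1 \<Longrightarrow> \<bar>omega c u * hlog w u\<bar> \<le> K / sqrt (1 - u)"
    by blast
  have "(\<lambda>u. omega c u * hlog w u) integrable_on {0<..<1}"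
  proof (rule measurable_bounded_by_integrable_imp_integrable)
    show "(\<lambda>u. omega c u * hlog w u) \<in> borel_measurable (lebesgue_on {0<..<1})"
      by (rule continuous_imp_measurable_on_sets_lebesgue[OF integrand_cont[OF g]]) simp
    have "(\<lambda>u. K * (1 / sqrt (1 - u))) integrable_on {0..1}"
      using integrable_on_cmult_left[OF isqrt_integrable, of K] by simp
    then show "(\<lambda>u. K / sqrt (1 - u)) integrable_on {0<..<1}"
      by (simp add: integrable_on_open_interval_real)
    show "norm (omega c u * hlog w u) \<le> K / sqrt (1 - u)" if "u \<in> {0<..<1}" for u
      using K(2)[of u] that by auto
  qed simp
  then show ?thesis by (simp add: integrable_on_open_interval_real)
qed



lemma eps_set_0: "eps_set 0 = {[]}"
  unfolding eps_set_def by auto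

lemma finite_eps_set: "finite (eps_set n)"
proof -
  have "eps_set n = {xs. set xs \<subseteq> {0,1} \<and> length xs = n}" unfolding eps_set_def by auto
  then show ?thesis using finite_lists_length_eq[of "{0,1::real}" n] by simp
qed

lemma eps_set_Suc: "eps_set (Suc n) = Cons 0 ` eps_set n \<union> Cons 1 ` eps_set n"
proof
  show "eps_set (Suc n) \<subseteq> Cons 0 ` eps_set n \<union> Cons 1 ` eps_set n"
  proof
    fix e assume "e \<in> eps_set (Suc n)"
    then obtain b e' where e: "e = b # e'" "b \<in> {0,1}" "e' \<in> eps_set n"
      unfolding eps_set_def by (cases e) auto
    then show "e \<in> Cons 0 ` eps_set n \<union> Cons 1 ` eps_set n" by auto
  qed
qed (auto simp: eps_set_def)

lemma sum_eps_Suc: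
  "(\<Sum>e\<in>eps_set (Suc n). h e) = (\<Sum>e\<in>eps_set n. h (0 # e) + h (1 # e))"
proof -
  have "(\<Sum>e\<in>eps_set (Suc n). h e) = (\<Sum>e\<in>Cons 0 ` eps_set n. h e) + (\<Sum>e\<in>Cons 1 ` eps_set n. h e)"
    unfolding eps_set_Suc by (rule sum.union_disjoint) (auto simp: finite_eps_set)
  also have "\<dots> = (\<Sum>e\<in>eps_set n. h (0 # e)) + (\<Sum>e\<in>eps_set n. h (1 # e))"
    by (simp add: sum.reindex)
  finally show ?thesis by (simp add: sum.distrib)
qed

lemma ones_Nil[simp]: "ones [] = 0" by (simp add: ones_def)
lemma ones_Cons: "ones (c # a) = (if c = 1 then Suc (ones a) else ones a)"
  by (simp add: ones_def)
lemma ones_le: "ones a \<le> length a"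
  by (simp add: ones_def)

lemma set_subst_ones:
  "set a \<subseteq> {0,1} \<Longrightarrow> e \<in> eps_set (ones a) \<Longrightarrow> set (subst_ones a e) \<subseteq> {0,1}"
proof (induction a arbitrary: e)
  case Nil then show ?case by simp
next
  case (Cons c a)
  show ?case
  proof (cases "c = 1")
    case True
    then obtain b e' where e: "e = b # e'" "b \<in> {0,1}" "e' \<in> eps_set (ones a)"
      using Cons.prems unfolding eps_set_def ones_Cons by (cases e) auto
    then show ?thesis using Cons True by auto
  next
    case False
    then show ?thesis using Cons by (auto simp: ones_Cons)
  qed
qed

lemma good_word:
  assumes "set a \<subseteq> {0,1}" "e \<in> eps_set (ones a)" "1 \<le> s" "c = 0 \<or> c = 1"
  shows "good (subst_ones a e @ [s])" "good (c # subst_ones a e @ [s])"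
  using set_subst_ones[OF assms(1,2)] assms(3,4) unfolding good_def by auto

definition Q :: "real list \<Rightarrow> real \<Rightarrow> real \<Rightarrow> real" where
  "Q a s x = (\<Sum>e\<in>eps_set (ones a). hlog (subst_ones a e @ [s]) x)"

lemma inner_sum_Q: "inner_sum a s x = (-1) ^ (length a - ones a) * Q a s x"
  unfolding inner_sum_def Q_def ..

lemma inner_sum_Nil: "inner_sum [] s x = hlog [s] x"
  unfolding inner_sum_def by (simp add: eps_set_0)

lemma Q_0: "Q (0 # a) s x = (\<Sum>e\<in>eps_set (ones a). hlog (0 # (subst_ones a e @ [s])) x)"
  unfolding Q_def by (simp add: ones_Cons)

lemma Q_1: "Q (1 # a) s x = (\<Sum>e\<in>eps_set (ones a).
     hlog (0 # (subst_ones a e @ [s])) x + hlog (1 # (subst_ones a e @ [s])) x)"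
  unfolding Q_def by (simp add: ones_Cons sum_eps_Suc)

lemma dQ:
  assumes a: "set a \<subseteq> {0,1}" and s: "1 \<le> s" and x: "0 < x" "x < 1" and c: "c = 0 \<or> c = 1"
  shows "((\<lambda>x. Q (c # a) s x) has_real_derivative
           (if c = 0 then 1 / x else 1 / x + 1 / (1 - x)) * Q a s x) (at x)"
proof (cases "c = 0")
  case True
  have "((\<lambda>x. \<Sum>e\<in>eps_set (ones a). hlog (0 # (subst_ones a e @ [s])) x) has_real_derivative
        (\<Sum>e\<in>eps_set (ones a). omega 0 x * hlog (subst_ones a e @ [s]) x)) (at x)"
    by (intro DERIV_sum hlog_deriv good_word[OF a _ s] x) auto
  then show ?thesis using True unfolding Q_0 by (simp add: Q_def sum_distrib_left omega_def ones_Cons del: hlog.simps)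
next
  case False
  then have c1: "c = 1" using c by auto
  have "((\<lambda>x. \<Sum>e\<in>eps_set (ones a). hlog (0 # (subst_ones a e @ [s])) x + hlog (1 # (subst_ones a e @ [s])) x)
        has_real_derivative
        (\<Sum>e\<in>eps_set (ones a). omega 0 x * hlog (subst_ones a e @ [s]) x + omega 1 x * hlog (subst_ones a e @ [s]) x)) (at x)"
    by (intro DERIV_sum DERIV_add hlog_deriv good_word[OF a _ s] x) auto
  then show ?thesis unfolding c1 Q_1
    by (simp add: Q_def sum_distrib_left omega_def algebra_simps sum.distrib del: hlog.simps)
qed

definition fc :: "real \<Rightarrow> real \<Rightarrow> real" where
  "fc c x = (if c = 0 then - (1 / x) else 1 / x + 1 / (1 - x))"

lemma dI:
  assumes a: "set a \<subseteq> {0,1}" and s: "1 \<le> s" and x: "0 < x" "x < 1" and c: "c = 0 \<or> c = 1"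
  shows "((\<lambda>x. inner_sum (c # a) s x) has_real_derivative fc c x * inner_sum a s x) (at x)"
proof -
  have le: "ones a \<le> length a" by (rule ones_le)
  have sg: "(-1::real) ^ (length (c # a) - ones (c # a)) =
        (if c = 0 then - ((-1) ^ (length a - ones a)) else (-1) ^ (length a - ones a))"
    using c le by (auto simp: ones_Cons Suc_diff_le)
  show ?thesis
    unfolding inner_sum_Q sg
    using DERIV_cmult[OF dQ[OF a s x c], of "if c = 0 then - ((-1) ^ (length a - ones a)) else (-1) ^ (length a - ones a)"]
    by (cases "c = 0") (auto simp: fc_def algebra_simps)
qed

lemma dI_Nil:
  assumes s: "1 \<le> s" and x: "0 < x" "x < 1"
  shows "((\<lambda>x. inner_sum [] s x) has_real_derivative 1 / (s - x)) (at x)"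
proof -
  have "good [s]" using s unfolding good_def by auto
  from hlog_deriv[OF this x] show ?thesis using s by (simp add: inner_sum_Nil omega_def del: hlog.simps(2))
qed

lemma dSum:
  assumes A: "finite A" and a: "\<And>k. k \<in> A \<Longrightarrow> set (a k) \<subseteq> {0,1}" and s: "1 \<le> s"
    and x: "0 < x" "x < 1" and c: "c = 0 \<or> c = 1"
  shows "((\<lambda>x. \<Sum>k\<in>A. inner_sum (c # a k) s x * B k) has_real_derivative
            fc c x * (\<Sum>k\<in>A. inner_sum (a k) s x * B k)) (at x)"
proof -
  have "((\<lambda>x. \<Sum>k\<in>A. inner_sum (c # a k) s x * B k) has_real_derivative
            (\<Sum>k\<in>A. fc c x * inner_sum (a k) s x * B k)) (at x)"
    by (intro DERIV_sum DERIV_cmult_right dI a s x c)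
  then show ?thesis by (simp add: sum_distrib_left mult.assoc)
qed



definition S1 :: "real list \<Rightarrow> real \<Rightarrow> real \<Rightarrow> real \<Rightarrow> real" where
  "S1 i s y x = (\<Sum>k\<in>{0..length i}. inner_sum (take k i) s x * hlog (drop k i) y)"

definition S2 :: "real list \<Rightarrow> real \<Rightarrow> real \<Rightarrow> real" where
  "S2 i y x = (\<Sum>k\<in>{k. k < length i \<and> i ! k = 1}. inner_sum (take k i) 1 x * hlog (drop k i) y)"

lemma S1_Nil: "S1 [] s y x = inner_sum [] s x"
  by (simp add: S1_def)

lemma S2_Nil: "S2 [] y x = 0"
  by (simp add: S2_def)

lemma S1_Cons: "S1 (c # i) s y x = inner_sum [] s x * hlog (c # i) y +
   (\<Sum>k\<in>{0..length i}. inner_sum (c # take k i) s x * hlog (drop k i) y)"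
  unfolding S1_def length_Cons sum.atLeast0_atMost_Suc_shift by (simp del: hlog.simps)

lemma S2_set: "{k. k < length (c # i) \<and> (c # i) ! k = 1} =
   (if c = 1 then insert 0 (Suc ` {k. k < length i \<and> i ! k = 1}) else Suc ` {k. k < length i \<and> i ! k = 1})"
proof -
  have "{k. k < length (c # i) \<and> (c # i) ! k = 1} =
      {k. k = 0 \<and> c = 1} \<union> Suc ` {k. k < length i \<and> i ! k = 1}"
  proof (intro set_eqI iffI)
    fix k assume "k \<in> {k. k < length (c # i) \<and> (c # i) ! k = 1}"
    then show "k \<in> {k. k = 0 \<and> c = 1} \<union> Suc ` {k. k < length i \<and> i ! k = 1}"
      by (cases k) auto
  qed auto
  then show ?thesis by auto
qed

lemma S2_Cons: "S2 (c # i) y x = (if c = 1 then inner_sum [] 1 x * hlog (c # i) y else 0) +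
   (\<Sum>k\<in>{k. k < length i \<and> i ! k = 1}. inner_sum (c # take k i) 1 x * hlog (drop k i) y)"
proof -
  have fin: "finite (Suc ` {k. k < length i \<and> i ! k = 1})" by auto
  have "(\<Sum>k\<in>Suc ` {k. k < length i \<and> i ! k = 1}. inner_sum (take k (c # i)) 1 x * hlog (drop k (c # i)) y)
     = (\<Sum>k\<in>{k. k < length i \<and> i ! k = 1}. inner_sum (c # take k i) 1 x * hlog (drop k i) y)"
    by (simp add: sum.reindex del: hlog.simps)
  then show ?thesis
    unfolding S2_def S2_set using fin by (auto simp del: hlog.simps)
qed

lemma omega_inv: "x \<noteq> 0 \<Longrightarrow> omega (inverse x) t = x / (1 - x * t)"
proof (cases "x * t = 1")
  case True
  assume x: "x \<noteq> 0"
  then have "inverse x = t" using True by (simp add: field_simps)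
  then show ?thesis using True x by (simp add: omega_def)
next
  case False
  assume x: "x \<noteq> 0"
  then have "inverse x - t \<noteq> 0" using False by (auto simp: field_simps)
  then show ?thesis using x False by (simp add: omega_def field_simps)
qed

lemma xt_lt1:
  fixes x t y :: real
  assumes "-1/2 < x" "x < 1" "0 \<le> t" "t \<le> y" "y < 1"
  shows "x * t < 1"
proof (cases "x \<le> 0")
  case True
  then have "x * t \<le> 0" using assms by (simp add: mult_nonpos_nonneg)
  then show ?thesis by simp
next
  case False
  then have "x * t \<le> 1 * t" using assms by (intro mult_right_mono) auto
  then show ?thesis using assms by simp
qed

definition F :: "real list \<Rightarrow> real \<Rightarrow> real \<Rightarrow> real" where
  "F i y x = integral {0..y} (\<lambda>t. x / (1 - x * t) * hlog i t)"

lemma F_eq: "0 < x \<Longrightarrow> hlog (inverse x # i) y = F i y x"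
  unfolding F_def by (simp add: omega_inv)

lemma F_deriv:
  assumes g: "good i" and y: "0 < y" "y < 1" and x: "-1/2 < x" "x < 1"
  shows "(F i y has_real_derivative integral {0..y} (\<lambda>t. hlog i t / (1 - x * t)^2)) (at x)"
proof -
  let ?U = "{-1/2<..<1::real}"
  have ci: "continuous_on {0..y} (hlog i)" using hlog_cont[OF g] y by simp
  have pos: "1 - x' * t > 0" if "x' \<in> ?U" "t \<in> {0..y}" for x' t
    using xt_lt1[of x' t y] that y by auto
  have "((\<lambda>x. integral (cbox 0 y) (\<lambda>t. x / (1 - x * t) * hlog i t)) has_field_derivative
          integral (cbox 0 y) (\<lambda>t. hlog i t / (1 - x * t)^2)) (at x within ?U)"
  proof (rule leibniz_rule_field_derivative)
    fix x' t assume x': "x' \<in> ?U" and t: "t \<in> cbox 0 y"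
    have p: "1 - x' * t \<noteq> 0" using pos[OF x', of t] t by simp
    show "((\<lambda>x. x / (1 - x * t) * hlog i t) has_field_derivative hlog i t / (1 - x' * t)^2) (at x' within ?U)"
      using p by (auto intro!: derivative_eq_intros simp: field_simps power2_eq_square)
  next
    fix x' assume x': "x' \<in> ?U"
    have "continuous_on {0..y} (\<lambda>t. x' / (1 - x' * t) * hlog i t)"
    proof -
      have p': "\<And>t. t \<in> {0..y} \<Longrightarrow> 1 - x' * t \<noteq> 0" using pos[OF x'] by force
      show ?thesis by (intro continuous_intros ci) (use p' in auto)
    qed
    then show "(\<lambda>t. x' / (1 - x' * t) * hlog i t) integrable_on cbox 0 y"
      by (simp add: integrable_continuous_real)
  next
    have c2: "continuous_on (?U \<times> {0..y}) (\<lambda>p. hlog i (snd p))"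
      by (rule continuous_on_compose2[OF ci continuous_on_snd]) auto
    have "continuous_on (?U \<times> {0..y}) (\<lambda>p. hlog i (snd p) / (1 - fst p * snd p)^2)"
      using pos by (intro continuous_intros c2) (auto, fastforce)
    then show "continuous_on (?U \<times> cbox 0 y) (\<lambda>(x, t). hlog i t / (1 - x * t)^2)"
      by (simp add: split_beta)
  qed (use x in auto)
  then show ?thesis
  proof -
    have "at x within ?U = at x" by (rule at_within_open) (use x in auto)
    then show ?thesis using \<open>(_ has_field_derivative _) (at x within ?U)\<close> unfolding F_def by simp
  qed
qed

lemma F_cont0:
  assumes g: "good i" and y: "0 < y" "y < 1"
  shows "(F i y \<longlongrightarrow> 0) (at_right 0)"
proof -
  have "isCont (F i y) 0"
    using F_deriv[OF g y, of 0] by (auto intro: DERIV_isCont)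
  then have "(F i y \<longlongrightarrow> F i y 0) (at_right 0)"
    by (simp add: isCont_def filterlim_at_split)
  then show ?thesis by (simp add: F_def)
qed

lemma byparts:
  assumes g: "good w" and y: "0 < y" "y < 1" and x: "0 < x" "x < 1"
    and D: "\<And>t. 0 < t \<Longrightarrow> t < 1 \<Longrightarrow> (hlog w has_real_derivative D t) (at t)"
  shows "integral {0..y} (\<lambda>t. hlog w t / (1 - x * t)^2) =
         y / (1 - x * y) * hlog w y - integral {0..y} (\<lambda>t. t / (1 - x * t) * D t)"
proof -
  have pos: "1 - x * t > 0" if "t \<in> {0..y}" for t
    using xt_lt1[of x t y] that x y by auto
  have p': "\<And>t. t \<in> {0..y} \<Longrightarrow> 1 - x * t \<noteq> 0" using pos by force
  have ci: "continuous_on {0..y} (hlog w)" using hlog_cont[OF g] y by simp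
  let ?A = "\<lambda>t. hlog w t / (1 - x * t)^2"
  let ?B = "\<lambda>t. t / (1 - x * t) * D t"
  let ?P = "\<lambda>t. t / (1 - x * t) * hlog w t"
  have "((\<lambda>t. ?A t + ?B t) has_integral (?P y - ?P 0)) {0..y}"
  proof (rule fundamental_theorem_of_calculus_interior)
    show "continuous_on {0..y} ?P" by (intro continuous_intros ci) (use p' in auto)
    fix t assume t: "t \<in> {0<..<y}"
    have pt: "1 - x * t \<noteq> 0" using p'[of t] t by simp
    have d1: "((\<lambda>t. t / (1 - x * t)) has_real_derivative 1 / (1 - x * t)^2) (at t)"
    proof -
      have "((\<lambda>t. t / (1 - x * t)) has_real_derivative (1 * (1 - x * t) - t * (0 - x * 1)) / ((1 - x * t) * (1 - x * t))) (at t)"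
        by (intro DERIV_divide DERIV_diff DERIV_cmult DERIV_ident DERIV_const pt)
      moreover have "(1 * (1 - x * t) - t * (0 - x * 1)) / ((1 - x * t) * (1 - x * t)) = 1 / (1 - x * t)^2"
        by (simp add: power2_eq_square algebra_simps)
      ultimately show ?thesis by simp
    qed
    have "(?P has_real_derivative (1 / (1 - x * t)^2) * hlog w t + t / (1 - x * t) * D t) (at t)"
      using DERIV_mult[OF d1 D[of t]] t y by (simp add: ac_simps)
    then show "(?P has_vector_derivative ?A t + ?B t) (at t)"
      by (simp add: has_real_derivative_iff_has_vector_derivative)
  qed (use y in simp)
  moreover have "?A integrable_on {0..y}"
    by (intro integrable_continuous_real continuous_intros ci) (use p' in auto)
  ultimately have "((\<lambda>t. (?A t + ?B t) - ?A t) has_integral (?P y - ?P 0 - integral {0..y} ?A)) {0..y}"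
    by (intro has_integral_diff) (auto intro: integrable_integral)
  then have "(?B has_integral (?P y - ?P 0 - integral {0..y} ?A)) {0..y}" by simp
  then have "integral {0..y} ?B = ?P y - ?P 0 - integral {0..y} ?A" by (rule integral_unique)
  then show ?thesis by simp
qed

lemma J0:
  assumes g: "good (0 # i)" and y: "0 < y" "y < 1" and x: "0 < x" "x < 1"
  shows "integral {0..y} (\<lambda>t. t / (1 - x * t) * (omega 0 t * hlog i t)) = (1 / x) * hlog (inverse x # i) y"
proof -
  have "(1 / x) * hlog (inverse x # i) y = (1 / x) * integral {0..y} (\<lambda>t. x / (1 - x * t) * hlog i t)"
    using x by (simp add: omega_inv del: integral_mult_right)
  also have "\<dots> = integral {0..y} (\<lambda>t. (1 / x) * (x / (1 - x * t) * hlog i t))"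
    by (rule integral_mult_right[symmetric])
  also have "\<dots> = integral {0..y} (\<lambda>t. t / (1 - x * t) * (omega 0 t * hlog i t))"
    by (rule integral_spike[of "{0}"]) (use x in \<open>auto simp: omega_def\<close>)
  finally show ?thesis by simp
qed

lemma J1:
  assumes g: "good (1 # i)" and y: "0 < y" "y < 1" and x: "0 < x" "x < 1"
  shows "integral {0..y} (\<lambda>t. t / (1 - x * t) * (omega 1 t * hlog i t)) =
     (1 / (1 - x)) * hlog (1 # i) y - (1 / (x * (1 - x))) * hlog (inverse x # i) y"
proof -
  have gi: "good i" using good_tl[OF g] .
  have gx: "good (inverse x # i)" using gi x unfolding good_def by (auto simp: one_le_inverse)
  have I1: "(\<lambda>t. omega 1 t * hlog i t) integrable_on {0..y}"
    using integrand_integrable[OF g] y by simp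
  have I2: "(\<lambda>t. omega (inverse x) t * hlog i t) integrable_on {0..y}"
    using integrand_integrable[OF gx] y by simp
  have "(1 / (1 - x)) * hlog (1 # i) y - (1 / (x * (1 - x))) * hlog (inverse x # i) y
     = integral {0..y} (\<lambda>t. (1 / (1 - x)) * (omega 1 t * hlog i t) - (1 / (x * (1 - x))) * (omega (inverse x) t * hlog i t))"
  proof -
    have I1': "(\<lambda>t. (1 / (1 - x)) * (omega 1 t * hlog i t)) integrable_on {0..y}"
      by (rule integrable_on_cmult_left[OF I1, simplified])
    have I2': "(\<lambda>t. (1 / (x * (1 - x))) * (omega (inverse x) t * hlog i t)) integrable_on {0..y}"
      by (rule integrable_on_cmult_left[OF I2, simplified])
    show ?thesis
      by (subst integral_diff[OF I1' I2']) (simp only: integral_mult_right hlog.simps)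
  qed
  also have "\<dots> = integral {0..y} (\<lambda>t. t / (1 - x * t) * (omega 1 t * hlog i t))"
  proof (rule integral_spike[of "{}"])
    fix t assume t: "t \<in> {0..y} - {}"
    have pt: "1 - x * t > 0" using xt_lt1[of x t y] t x y by auto
    have t1: "1 - t > 0" using t y by auto
    show "t / (1 - x * t) * (omega 1 t * hlog i t) =
      (1 / (1 - x)) * (omega 1 t * hlog i t) - (1 / (x * (1 - x))) * (omega (inverse x) t * hlog i t)"
    proof -
      have n: "1 - x*t \<noteq> 0" "1 - t \<noteq> 0" "1 - x \<noteq> 0" "x \<noteq> 0" using pt t1 x by auto
      have key: "t / (1 - x*t) * (1/(1-t)) = (1/(1-x))*(1/(1-t)) - (1/(x*(1-x)))*(x/(1-x*t))"
        using n by (simp add: divide_simps) (simp add: algebra_simps)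
      have "t / (1 - x * t) * (omega 1 t * hlog i t) = (t / (1 - x*t) * (1/(1-t))) * hlog i t"
        by (simp add: omega_def)
      also have "\<dots> = ((1/(1-x))*(1/(1-t)) - (1/(x*(1-x)))*(x/(1-x*t))) * hlog i t" by (simp only: key)
      also have "\<dots> = (1 / (1 - x)) * (omega 1 t * hlog i t) - (1 / (x * (1 - x))) * (omega (inverse x) t * hlog i t)"
        using n by (simp only: omega_inv[OF n(4)]) (simp only: omega_def left_diff_distrib mult.assoc if_False one_neq_zero)
      finally show ?thesis .
    qed
  qed simp
  finally show ?thesis by simp
qed



definition R :: "real list \<Rightarrow> real \<Rightarrow> real \<Rightarrow> real" where
  "R i y x = S1 i (inverse y) y x - S2 i y x"

lemma inv_ge1: "0 < y \<Longrightarrow> y < 1 \<Longrightarrow> 1 \<le> inverse (y::real)"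
  by (simp add: one_le_inverse)

lemma dR_Nil:
  assumes x: "0 < x" "x < 1" and y: "0 < y" "y < 1"
  shows "((\<lambda>x. R [] y x) has_real_derivative y / (1 - x * y)) (at x)"
proof -
  have "((\<lambda>x. inner_sum [] (inverse y) x) has_real_derivative 1 / (inverse y - x)) (at x)"
    by (rule dI_Nil[OF inv_ge1[OF y] x])
  moreover have "1 / (inverse y - x) = y / (1 - x * y)"
    using y x by (simp add: field_simps)
  ultimately show ?thesis by (simp add: R_def S1_Nil S2_Nil)
qed

lemma dR_Cons:
  assumes i: "set (c # i) \<subseteq> {0,1}" and x: "0 < x" "x < 1" and y: "0 < y" "y < 1"
  shows "((\<lambda>x. R (c # i) y x) has_real_derivative
     y / (1 - x * y) * hlog (c # i) y - (if c = 1 then 1 / (1 - x) * hlog (c # i) y else 0)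
       + fc c x * R i y x) (at x)"
proof -
  have c: "c = 0 \<or> c = 1" using i by auto
  have tk: "\<And>k. set (take k i) \<subseteq> {0,1}" using i by (meson set_take_subset subset_trans set_subset_Cons)
  let ?L = "hlog (c # i) y"
  have d1: "((\<lambda>x. inner_sum [] (inverse y) x * ?L) has_real_derivative (y / (1 - x * y)) * ?L) (at x)"
  proof -
    have "((\<lambda>x. inner_sum [] (inverse y) x) has_real_derivative 1 / (inverse y - x)) (at x)"
      by (rule dI_Nil[OF inv_ge1[OF y] x])
    moreover have "1 / (inverse y - x) = y / (1 - x * y)"
      using y x by (simp add: field_simps)
    ultimately show ?thesis using DERIV_cmult_right by fastforce
  qed
  have d2: "((\<lambda>x. \<Sum>k\<in>{0..length i}. inner_sum (c # take k i) (inverse y) x * hlog (drop k i) y)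
     has_real_derivative fc c x * S1 i (inverse y) y x) (at x)"
    unfolding S1_def by (rule dSum[OF _ tk inv_ge1[OF y] x c]) auto
  have d3: "((\<lambda>x. \<Sum>k\<in>{k. k < length i \<and> i ! k = 1}. inner_sum (c # take k i) 1 x * hlog (drop k i) y)
     has_real_derivative fc c x * S2 i y x) (at x)"
    unfolding S2_def by (rule dSum[OF _ tk _ x c]) auto
  show ?thesis
  proof (cases "c = 1")
    case True
    have d4: "((\<lambda>x. inner_sum [] 1 x * ?L) has_real_derivative (1 / (1 - x)) * ?L) (at x)"
      by (intro DERIV_cmult_right dI_Nil x) simp
    have "((\<lambda>x. (inner_sum [] (inverse y) x * ?L +
         (\<Sum>k\<in>{0..length i}. inner_sum (c # take k i) (inverse y) x * hlog (drop k i) y)) -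
        (inner_sum [] 1 x * ?L + (\<Sum>k\<in>{k. k < length i \<and> i ! k = 1}. inner_sum (c # take k i) 1 x * hlog (drop k i) y)))
      has_real_derivative ((y / (1 - x * y)) * ?L + fc c x * S1 i (inverse y) y x) - ((1 / (1 - x)) * ?L + fc c x * S2 i y x)) (at x)"
      by (intro DERIV_diff DERIV_add d1 d2 d3 d4)
    then show ?thesis using True
      unfolding R_def S1_Cons S2_Cons by (simp add: algebra_simps del: hlog.simps)
  next
    case False
    have "((\<lambda>x. (inner_sum [] (inverse y) x * ?L +
         (\<Sum>k\<in>{0..length i}. inner_sum (c # take k i) (inverse y) x * hlog (drop k i) y)) -
        (0 + (\<Sum>k\<in>{k. k < length i \<and> i ! k = 1}. inner_sum (c # take k i) 1 x * hlog (drop k i) y)))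
      has_real_derivative ((y / (1 - x * y)) * ?L + fc c x * S1 i (inverse y) y x) - (0 + fc c x * S2 i y x)) (at x)"
      by (intro DERIV_diff DERIV_add d1 d2 d3 DERIV_const)
    then show ?thesis using False
      unfolding R_def S1_Cons S2_Cons by (simp add: algebra_simps del: hlog.simps)
  qed
qed

lemma inner_sum_tendsto0:
  assumes a: "set a \<subseteq> {0,1}" and s: "1 \<le> s"
  shows "((\<lambda>x. inner_sum a s x) \<longlongrightarrow> 0) (at_right 0)"
proof -
  have "((\<lambda>x. \<Sum>e\<in>eps_set (ones a). hlog (subst_ones a e @ [s]) x) \<longlongrightarrow> (\<Sum>e\<in>eps_set (ones a). 0)) (at_right 0)"
    by (intro tendsto_sum hlog_tendsto0 good_word[OF a _ s]) auto
  then have "((\<lambda>x. (-1) ^ (length a - ones a) * Q a s x) \<longlongrightarrow> (-1) ^ (length a - ones a) * 0) (at_right 0)"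
    unfolding Q_def by (intro tendsto_mult tendsto_const) simp
  then show ?thesis unfolding inner_sum_Q by simp
qed

lemma R_tendsto0:
  assumes i: "set i \<subseteq> {0,1}" and y: "0 < y" "y < 1"
  shows "((\<lambda>x. R i y x) \<longlongrightarrow> 0) (at_right 0)"
proof -
  have tk: "\<And>k. set (take k i) \<subseteq> {0,1}" using i by (meson set_take_subset subset_trans)
  have "((\<lambda>x. S1 i (inverse y) y x) \<longlongrightarrow> (\<Sum>k\<in>{0..length i}. 0 * hlog (drop k i) y)) (at_right 0)"
    unfolding S1_def by (intro tendsto_sum tendsto_mult tendsto_const inner_sum_tendsto0 tk inv_ge1 y)
  moreover have "((\<lambda>x. S2 i y x) \<longlongrightarrow> (\<Sum>k\<in>{k. k < length i \<and> i ! k = 1}. 0 * hlog (drop k i) y)) (at_right 0)"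
    unfolding S2_def by (intro tendsto_sum tendsto_mult tendsto_const inner_sum_tendsto0 tk) auto
  ultimately have "((\<lambda>x. S1 i (inverse y) y x - S2 i y x) \<longlongrightarrow> 0 - 0) (at_right 0)"
    by (intro tendsto_diff) auto
  then show ?thesis unfolding R_def by simp
qed

lemma zero_by_deriv:
  fixes G :: "real \<Rightarrow> real"
  assumes d: "\<And>x. 0 < x \<Longrightarrow> x < 1 \<Longrightarrow> (G has_real_derivative 0) (at x)"
    and l: "(G \<longlongrightarrow> 0) (at_right 0)"
    and x: "0 < x" "x < 1"
  shows "G x = 0"
proof -
  have "\<exists>c. \<forall>z\<in>{0<..<1::real}. G z = c"
    by (rule has_field_derivative_zero_constant) (auto intro: has_field_derivative_at_within d)
  then obtain c where c: "\<And>z. z \<in> {0<..<1} \<Longrightarrow> G z = c" by blast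
  have "eventually (\<lambda>z. G z = c) (at_right (0::real))"
    unfolding eventually_at_right_field by (intro exI[of _ 1]) (auto intro: c)
  then have "(G \<longlongrightarrow> c) (at_right 0)"
    by (rule tendsto_eventually)
  then have "c = 0" using l tendsto_unique[OF trivial_limit_at_right_real] by blast
  then show ?thesis using c x by auto
qed

lemma hlog_nil_ext: "hlog [] = (\<lambda>_. 1)" by (rule ext) simp

lemma part1:
  "set i \<subseteq> {0,1} \<Longrightarrow> good i \<Longrightarrow> 0 < y \<Longrightarrow> y < 1 \<Longrightarrow> 0 < x \<Longrightarrow> x < 1 \<Longrightarrow>
    hlog (inverse x # i) y = R i y x"
proof (induction i arbitrary: x)
  case Nil
  let ?G = "\<lambda>x. F [] y x - R [] y x"
  have "?G x = 0"
  proof (rule zero_by_deriv[where G = ?G])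
    fix z :: real assume z: "0 < z" "z < 1"
    have g0: "good []" by (simp add: good_def)
    have "integral {0..y} (\<lambda>t. hlog [] t / (1 - z * t)^2) =
        y / (1 - z * y) * hlog [] y - integral {0..y} (\<lambda>t. t / (1 - z * t) * 0)"
      by (rule byparts[OF g0 Nil(3,4) z]) (simp add: hlog_nil_ext)
    then have e: "integral {0..y} (\<lambda>t. hlog [] t / (1 - z * t)^2) = y / (1 - z * y)" by simp
    have "(?G has_real_derivative (integral {0..y} (\<lambda>t. hlog [] t / (1 - z * t)^2) - y / (1 - z * y))) (at z)"
      using z Nil by (intro DERIV_diff F_deriv dR_Nil g0; simp)
    then show "(?G has_real_derivative 0) (at z)" using e by simp
  next
    show "(?G \<longlongrightarrow> 0) (at_right 0)"
      using tendsto_diff[OF F_cont0[of "[]" y] R_tendsto0[of "[]" y]] Nil by (simp add: good_def)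
  qed (use Nil in auto)
  then show ?case using F_eq[OF Nil(5), of "[]" y] by simp
next
  case (Cons c i)
  have ci: "set (c # i) \<subseteq> {0,1}" and g: "good (c # i)" and y: "0 < y" "y < 1" using Cons.prems by auto
  have si: "set i \<subseteq> {0,1}" using ci by auto
  have gi: "good i" using good_tl[OF g] .
  have c: "c = 0 \<or> c = 1" using ci by auto
  have IH: "\<And>z. 0 < z \<Longrightarrow> z < 1 \<Longrightarrow> hlog (inverse z # i) y = R i y z"
    using Cons.IH[OF si gi y] by blast
  let ?L = "hlog (c # i) y"
  let ?G = "\<lambda>x. F (c # i) y x - R (c # i) y x"
  have "?G x = 0"
  proof (rule zero_by_deriv[where G = ?G])
    fix z :: real assume z: "0 < z" "z < 1"
    have bp: "integral {0..y} (\<lambda>t. hlog (c # i) t / (1 - z * t)^2) =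
        y / (1 - z * y) * ?L - integral {0..y} (\<lambda>t. t / (1 - z * t) * (omega c t * hlog i t))"
      by (rule byparts[OF g y z]) (rule hlog_deriv[OF g])
    have "(?G has_real_derivative (integral {0..y} (\<lambda>t. hlog (c # i) t / (1 - z * t)^2) -
        (y / (1 - z * y) * ?L - (if c = 1 then 1 / (1 - z) * ?L else 0) + fc c z * R i y z))) (at z)"
      using z by (intro DERIV_diff F_deriv dR_Cons g ci y; simp)
    moreover have "integral {0..y} (\<lambda>t. hlog (c # i) t / (1 - z * t)^2) =
        y / (1 - z * y) * ?L - (if c = 1 then 1 / (1 - z) * ?L else 0) + fc c z * R i y z"
    proof (cases "c = 0")
      case True
      have "integral {0..y} (\<lambda>t. t / (1 - z * t) * (omega c t * hlog i t)) = (1 / z) * R i y z"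
        using J0[OF g[unfolded True] y z] IH[OF z] True by simp
      then show ?thesis using bp True by (simp add: fc_def)
    next
      case False
      then have c1: "c = 1" using c by auto
      have "integral {0..y} (\<lambda>t. t / (1 - z * t) * (omega c t * hlog i t)) =
          (1 / (1 - z)) * ?L - (1 / (z * (1 - z))) * R i y z"
        using J1[OF g[unfolded c1] y z] IH[OF z] c1 by simp
      moreover have "1 / (z * (1 - z)) = 1 / z + 1 / (1 - z)" using z by (simp add: field_simps)
      ultimately have "integral {0..y} (\<lambda>t. hlog (c # i) t / (1 - z * t)^2) =
          y / (1 - z * y) * ?L - ((1 / (1 - z)) * ?L - (1 / z + 1 / (1 - z)) * R i y z)"
        using bp by (simp only:)
      then show ?thesis using c1 by (simp add: fc_def algebra_simps del: hlog.simps)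
    qed
    ultimately show "(?G has_real_derivative 0) (at z)" by simp
  next
    show "(?G \<longlongrightarrow> 0) (at_right 0)"
      using tendsto_diff[OF F_cont0[OF g y] R_tendsto0[OF ci y]] by simp
  qed (use Cons.prems in auto)
  then show ?case using F_eq[of x "c # i" y] Cons.prems by simp
qed



lemma int_bound_const:
  fixes f :: "real \<Rightarrow> real"
  assumes "f integrable_on {0..t}" "0 \<le> t" "\<And>u. u \<in> {0..t} \<Longrightarrow> \<bar>f u\<bar> \<le> M"
  shows "\<bar>integral {0..t} f\<bar> \<le> t * M"
proof -
  have "norm (integral {0..t} f) \<le> integral {0..t} (\<lambda>u. M)"
    by (rule integral_norm_bound_integral) (use assms in auto)
  then show ?thesis using assms(2) by simp
qed

lemma lip_word:
  assumes v: "set v \<subseteq> {0,1}" and b: "0 \<le> b" "b < 1"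
  shows "\<exists>K\<ge>0. \<forall>s s' t. 1 \<le> s \<longrightarrow> 1 \<le> s' \<longrightarrow> 0 \<le> t \<longrightarrow> t \<le> b \<longrightarrow>
     \<bar>hlog (v @ [s]) t - hlog (v @ [s']) t\<bar> \<le> K * t * \<bar>s - s'\<bar>"
  using v
proof (induction v)
  case Nil
  show ?case
  proof (intro exI[of _ "1 / (1 - b)^2"] conjI allI impI)
    fix s s' t :: real assume s: "1 \<le> s" "1 \<le> s'" and t: "0 \<le> t" "t \<le> b"
    have gs: "good [s]" "good [s']" using s by (auto simp: good_def)
    have "hlog ([] @ [s]) t - hlog ([] @ [s']) t = integral {0..t} (\<lambda>u. omega s u * hlog [] u - omega s' u * hlog [] u)"
      using integrand_integrable[OF gs(1) t(1)] integrand_integrable[OF gs(2) t(1)] t b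
      by (simp add: integral_diff del: hlog.simps(1))
    also have "\<bar>\<dots>\<bar> \<le> t * (\<bar>s - s'\<bar> / (1 - b)^2)"
    proof (rule int_bound_const)
      show "(\<lambda>u. omega s u * hlog [] u - omega s' u * hlog [] u) integrable_on {0..t}"
        using integrand_integrable[OF gs(1) t(1)] integrand_integrable[OF gs(2) t(1)] t b
        by (intro integrable_diff) auto
      fix u assume u: "u \<in> {0..t}"
      have p: "1 - b \<le> s - u" "1 - b \<le> s' - u" "0 < 1 - b" using u t s b by auto
      have "\<bar>omega s u * hlog [] u - omega s' u * hlog [] u\<bar> = \<bar>s' - s\<bar> / ((s - u) * (s' - u))"
      proof -
        have n: "s - u > 0" "s' - u > 0" using p by auto
        have "omega s u * hlog [] u - omega s' u * hlog [] u = (s' - s) / ((s - u) * (s' - u))"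
          using n s by (simp add: omega_def field_simps)
        moreover have "\<bar>(s' - s) / ((s - u) * (s' - u))\<bar> = \<bar>s' - s\<bar> / ((s - u) * (s' - u))"
          using n by (simp add: abs_div abs_mult)
        ultimately show ?thesis by simp
      qed
      also have "\<dots> \<le> \<bar>s - s'\<bar> / ((1 - b) * (1 - b))"
        using p by (subst abs_minus_commute) (intro divide_left_mono mult_mono mult_pos_pos, auto)
      finally show "\<bar>omega s u * hlog [] u - omega s' u * hlog [] u\<bar> \<le> \<bar>s - s'\<bar> / (1 - b)^2"
        by (simp add: power2_eq_square)
    qed (use t in auto)
    finally show "\<bar>hlog ([] @ [s]) t - hlog ([] @ [s']) t\<bar> \<le> 1 / (1 - b)^2 * t * \<bar>s - s'\<bar>" by simp
  qed simp
next
  case (Cons c v)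
  then obtain K where K: "0 \<le> K" "\<And>s s' t. 1 \<le> s \<Longrightarrow> 1 \<le> s' \<Longrightarrow> 0 \<le> t \<Longrightarrow> t \<le> b \<Longrightarrow>
     \<bar>hlog (v @ [s]) t - hlog (v @ [s']) t\<bar> \<le> K * t * \<bar>s - s'\<bar>" by auto
  have c: "c = 0 \<or> c = 1" using Cons.prems by auto
  show ?case
  proof (intro exI[of _ "K / (1 - b)"] conjI allI impI)
    fix s s' t :: real assume s: "1 \<le> s" "1 \<le> s'" and t: "0 \<le> t" "t \<le> b"
    have gs: "good (c # v @ [s])" "good (c # v @ [s'])" using s Cons.prems by (auto simp: good_def)
    have I1: "(\<lambda>u. omega c u * hlog (v @ [s]) u) integrable_on {0..t}"
      using integrand_integrable[OF gs(1) t(1)] t b by simp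
    have I2: "(\<lambda>u. omega c u * hlog (v @ [s']) u) integrable_on {0..t}"
      using integrand_integrable[OF gs(2) t(1)] t b by simp
    have "hlog ((c # v) @ [s]) t - hlog ((c # v) @ [s']) t =
        integral {0..t} (\<lambda>u. omega c u * hlog (v @ [s]) u - omega c u * hlog (v @ [s']) u)"
      using I1 I2 by (simp add: integral_diff)
    also have "\<bar>\<dots>\<bar> \<le> t * (K * \<bar>s - s'\<bar> / (1 - b))"
    proof (rule int_bound_const)
      show "(\<lambda>u. omega c u * hlog (v @ [s]) u - omega c u * hlog (v @ [s']) u) integrable_on {0..t}"
        using I1 I2 by (rule integrable_diff)
      fix u assume u: "u \<in> {0..t}"
      have ub: "0 \<le> u" "u \<le> b" using u t by auto
      have Kb: "\<bar>hlog (v @ [s]) u - hlog (v @ [s']) u\<bar> \<le> K * u * \<bar>s - s'\<bar>" using K(2)[OF s ub] .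
      have "\<bar>omega c u * hlog (v @ [s]) u - omega c u * hlog (v @ [s']) u\<bar> =
          \<bar>omega c u\<bar> * \<bar>hlog (v @ [s]) u - hlog (v @ [s']) u\<bar>" by (simp add: abs_mult right_diff_distrib[symmetric])
      also have "\<dots> \<le> \<bar>omega c u\<bar> * (K * u * \<bar>s - s'\<bar>)" by (intro mult_left_mono Kb) simp
      also have "\<dots> \<le> K * \<bar>s - s'\<bar> / (1 - b)"
      proof (cases "c = 0")
        case True
        have "\<bar>omega c u\<bar> * (K * u * \<bar>s - s'\<bar>) \<le> K * \<bar>s - s'\<bar>"
          using True ub K(1) by (cases "u = 0") (auto simp: omega_def)
        also have "\<dots> \<le> K * \<bar>s - s'\<bar> / (1 - b)"
          using b K(1) by (simp add: divide_simps mult_left_le)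
        finally show ?thesis .
      next
        case False
        then have c1: "c = 1" using c by auto
        have "\<bar>omega c u\<bar> * (K * u * \<bar>s - s'\<bar>) = (u / (1 - u)) * (K * \<bar>s - s'\<bar>)"
          using c1 ub b by (simp add: omega_def)
        also have "\<dots> \<le> (1 / (1 - b)) * (K * \<bar>s - s'\<bar>)"
        proof (rule mult_right_mono)
          have "u * (1 - b) \<le> 1 * (1 - b)" using ub b by (intro mult_right_mono) auto
          moreover have "1 * (1 - b) \<le> 1 - u" using ub by simp
          ultimately have h2: "u * (1 - b) \<le> 1 - u" by (rule order_trans)
          show "u / (1 - u) \<le> 1 / (1 - b)" using ub b h2 by (simp add: divide_simps)
        qed (use K(1) in simp)
        finally show ?thesis by simp
      qed
      finally show "\<bar>omega c u * hlog (v @ [s]) u - omega c u * hlog (v @ [s']) u\<bar> \<le> K * \<bar>s - s'\<bar> / (1 - b)" .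
    qed (use t in auto)
    finally show "\<bar>hlog ((c # v) @ [s]) t - hlog ((c # v) @ [s']) t\<bar> \<le> K / (1 - b) * t * \<bar>s - s'\<bar>"
      by (simp add: ac_simps)
  qed (use K b in simp)
qed



lemma lip_inner:
  assumes a: "set a \<subseteq> {0,1}" and x: "0 \<le> x" "x < 1"
  shows "\<exists>K\<ge>0. \<forall>s s'. 1 \<le> s \<longrightarrow> 1 \<le> s' \<longrightarrow> \<bar>inner_sum a s x - inner_sum a s' x\<bar> \<le> K * \<bar>s - s'\<bar>"
proof -
  let ?E = "eps_set (ones a)"
  have "\<forall>e\<in>?E. \<exists>K. K \<ge> 0 \<and> (\<forall>s s' t. 1 \<le> s \<longrightarrow> 1 \<le> s' \<longrightarrow> 0 \<le> t \<longrightarrow> t \<le> x \<longrightarrow>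
     \<bar>hlog (subst_ones a e @ [s]) t - hlog (subst_ones a e @ [s']) t\<bar> \<le> K * t * \<bar>s - s'\<bar>)"
    using lip_word[OF set_subst_ones[OF a] x] by blast
  then obtain Kf where Kf: "\<And>e. e \<in> ?E \<Longrightarrow> Kf e \<ge> 0"
    "\<And>e s s' t. e \<in> ?E \<Longrightarrow> 1 \<le> s \<Longrightarrow> 1 \<le> s' \<Longrightarrow> 0 \<le> t \<Longrightarrow> t \<le> x \<Longrightarrow>
     \<bar>hlog (subst_ones a e @ [s]) t - hlog (subst_ones a e @ [s']) t\<bar> \<le> Kf e * t * \<bar>s - s'\<bar>"
    by metis
  show ?thesis
  proof (intro exI[of _ "\<Sum>e\<in>?E. Kf e * x"] conjI allI impI)
    show "0 \<le> (\<Sum>e\<in>?E. Kf e * x)" using Kf(1) x by (intro sum_nonneg) auto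
    fix s s' :: real assume s: "1 \<le> s" "1 \<le> s'"
    have "\<bar>inner_sum a s x - inner_sum a s' x\<bar> = \<bar>Q a s x - Q a s' x\<bar>"
      unfolding inner_sum_Q by (simp add: right_diff_distrib[symmetric] abs_mult)
    also have "\<dots> = \<bar>\<Sum>e\<in>?E. hlog (subst_ones a e @ [s]) x - hlog (subst_ones a e @ [s']) x\<bar>"
      unfolding Q_def by (simp add: sum_subtractf)
    also have "\<dots> \<le> (\<Sum>e\<in>?E. \<bar>hlog (subst_ones a e @ [s]) x - hlog (subst_ones a e @ [s']) x\<bar>)"
      by (rule sum_abs)
    also have "\<dots> \<le> (\<Sum>e\<in>?E. Kf e * x * \<bar>s - s'\<bar>)"
      by (intro sum_mono Kf(2) s x) auto
    also have "\<dots> = (\<Sum>e\<in>?E. Kf e * x) * \<bar>s - s'\<bar>"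
      by (simp add: sum_distrib_right)
    finally show "\<bar>inner_sum a s x - inner_sum a s' x\<bar> \<le> (\<Sum>e\<in>?E. Kf e * x) * \<bar>s - s'\<bar>" .
  qed
qed

lemma inner_diff_bound:
  assumes a: "set a \<subseteq> {0,1}" and x: "0 \<le> x" "x < 1"
  shows "\<exists>K\<ge>0. \<forall>y. 0 < y \<and> y < 1 \<longrightarrow>
     \<bar>inner_sum a (inverse y) x - inner_sum a 1 x\<bar> \<le> K * (1 - y) / y"
proof -
  obtain K where K: "K \<ge> 0" "\<And>s s'. 1 \<le> s \<Longrightarrow> 1 \<le> s' \<Longrightarrow> \<bar>inner_sum a s x - inner_sum a s' x\<bar> \<le> K * \<bar>s - s'\<bar>"
    using lip_inner[OF a x] by blast
  show ?thesis
  proof (intro exI[of _ K] conjI allI impI)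
    fix y :: real assume y: "0 < y \<and> y < 1"
    have "\<bar>inner_sum a (inverse y) x - inner_sum a 1 x\<bar> \<le> K * \<bar>inverse y - 1\<bar>"
      using K(2)[of "inverse y" 1] y inv_ge1[of y] by auto
    also have "\<bar>inverse y - 1\<bar> = (1 - y) / y" using y by (simp add: field_simps)
    finally show "\<bar>inner_sum a (inverse y) x - inner_sum a 1 x\<bar> \<le> K * (1 - y) / y" by simp
  qed (use K in simp)
qed

lemma inner_left1:
  assumes a: "set a \<subseteq> {0,1}" and x: "0 \<le> x" "x < 1"
  shows "((\<lambda>y. inner_sum a (inverse y) x) \<longlongrightarrow> inner_sum a 1 x) (at_left 1)"
proof -
  obtain K where K: "K \<ge> 0" "\<And>y. 0 < y \<Longrightarrow> y < 1 \<Longrightarrow>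
     \<bar>inner_sum a (inverse y) x - inner_sum a 1 x\<bar> \<le> K * (1 - y) / y"
    using inner_diff_bound[OF a x] by blast
  have "((\<lambda>y. inner_sum a (inverse y) x - inner_sum a 1 x) \<longlongrightarrow> 0) (at_left 1)"
  proof (rule Lim_null_comparison)
    show "eventually (\<lambda>y. norm (inner_sum a (inverse y) x - inner_sum a 1 x) \<le> K * (1 - y) / y) (at_left 1)"
      unfolding eventually_at_left_field by (intro exI[of _ 0]) (auto intro: K(2))
    have "((\<lambda>y::real. K * (1 - y) / y) \<longlongrightarrow> K * (1 - 1) / 1) (at_left 1)"
      by (intro tendsto_intros) auto
    then show "((\<lambda>y::real. K * (1 - y) / y) \<longlongrightarrow> 0) (at_left 1)" by simp
  qed
  then have "((\<lambda>y. (inner_sum a (inverse y) x - inner_sum a 1 x) + inner_sum a 1 x) \<longlongrightarrow> 0 + inner_sum a 1 x) (at_left 1)"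
    by (intro tendsto_add tendsto_const)
  then show ?thesis by simp
qed

lemma hlog_left1:
  assumes g: "good (c # w)" and c: "c = 0 \<or> 1 < c"
  shows "((\<lambda>y. hlog (c # w) y) \<longlongrightarrow> hlog (c # w) 1) (at_left 1)"
proof -
  have "continuous_on {0..1} (\<lambda>t. integral {0..t} (\<lambda>u. omega c u * hlog w u))"
    by (rule indefinite_integral_continuous_1[OF integrand_integrable01[OF g c]])
  then have "((\<lambda>t. integral {0..t} (\<lambda>u. omega c u * hlog w u)) \<longlongrightarrow>
      integral {0..1} (\<lambda>u. omega c u * hlog w u)) (at 1 within {0..1})"
    unfolding continuous_on_def by auto
  then show ?thesis unfolding hlog_Cons_fun using at_within_Icc_at_left[of "0::real" 1] by simp
qed

lemma good_drop: "good i \<Longrightarrow> good (drop k i)"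
  unfolding good_def by (auto dest: in_set_dropD simp: last_drop)

lemma decomp:
  assumes i: "set i \<subseteq> {0,1}"
  shows "R i y x =
    (\<Sum>k\<in>{k. k \<le> length i \<and> (k = length i \<or> i ! k = 0)}. inner_sum (take k i) (inverse y) x * hlog (drop k i) y)
  + (\<Sum>k\<in>{k. k < length i \<and> i ! k = 1}. (inner_sum (take k i) (inverse y) x - inner_sum (take k i) 1 x) * hlog (drop k i) y)"
proof -
  let ?K0 = "{k. k \<le> length i \<and> (k = length i \<or> i ! k = 0)}"
  let ?K1 = "{k. k < length i \<and> i ! k = 1}"
  have un: "{0..length i} = ?K0 \<union> ?K1"
  proof (intro set_eqI iffI)
    fix k assume k: "k \<in> {0..length i}"
    show "k \<in> ?K0 \<union> ?K1"
    proof (cases "k = length i")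
      case False
      then have "k < length i" using k by auto
      then have "i ! k \<in> {0,1}" using i nth_mem by blast
      then show ?thesis using \<open>k < length i\<close> by auto
    qed auto
  qed auto
  have dis: "?K0 \<inter> ?K1 = {}" by auto
  have "S1 i (inverse y) y x = (\<Sum>k\<in>?K0. inner_sum (take k i) (inverse y) x * hlog (drop k i) y)
      + (\<Sum>k\<in>?K1. inner_sum (take k i) (inverse y) x * hlog (drop k i) y)"
    unfolding S1_def un by (rule sum.union_disjoint) (use dis in auto)
  then show ?thesis
    unfolding R_def S2_def by (simp add: left_diff_distrib sum_subtractf del: hlog.simps)
qed

lemma part2:
  assumes i: "i \<noteq> []" "set i \<subseteq> {0,1}" "last i = 1" and x: "0 < x" "x < 1"
  shows "hlog (inverse x # i) 1 =
     (\<Sum>k\<in>{k. k \<le> length i \<and> (k = length i \<or> i ! k = 0)}. inner_sum (take k i) 1 x * hlog (drop k i) 1)"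
proof -
  let ?K0 = "{k. k \<le> length i \<and> (k = length i \<or> i ! k = 0)}"
  let ?K1 = "{k. k < length i \<and> i ! k = 1}"
  have gi: "good i" using i unfolding good_def by auto
  have tk: "\<And>k. set (take k i) \<subseteq> {0,1}" using i by (meson set_take_subset subset_trans)
  have gx: "good (inverse x # i)" using gi x unfolding good_def by (auto simp: one_le_inverse)
  have lhs: "((\<lambda>y. hlog (inverse x # i) y) \<longlongrightarrow> hlog (inverse x # i) 1) (at_left 1)"
    by (rule hlog_left1[OF gx]) (use x in \<open>simp add: one_less_inverse\<close>)
  have ev: "eventually (\<lambda>y. hlog (inverse x # i) y = R i y x) (at_left 1)"
    unfolding eventually_at_left_field
    by (intro exI[of _ 0]) (use part1[OF i(2) gi _ _ x] in auto)
  have t0: "((\<lambda>y. \<Sum>k\<in>?K0. inner_sum (take k i) (inverse y) x * hlog (drop k i) y) \<longlongrightarrow>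
       (\<Sum>k\<in>?K0. inner_sum (take k i) 1 x * hlog (drop k i) 1)) (at_left 1)"
  proof (intro tendsto_sum tendsto_mult inner_left1 tk)
    fix k assume k: "k \<in> ?K0"
    show "((\<lambda>y. hlog (drop k i) y) \<longlongrightarrow> hlog (drop k i) 1) (at_left 1)"
    proof (cases "k = length i")
      case True
      then show ?thesis by simp
    next
      case False
      then have kl: "k < length i" and ik: "i ! k = 0" using k by auto
      have d: "drop k i = 0 # drop (Suc k) i" using Cons_nth_drop_Suc[OF kl] ik by simp
      have "good (0 # drop (Suc k) i)" using good_drop[OF gi, of k] d by simp
      then show ?thesis unfolding d by (rule hlog_left1) simp
    qed
  qed (use x in auto)
  have t1: "((\<lambda>y. \<Sum>k\<in>?K1. (inner_sum (take k i) (inverse y) x - inner_sum (take k i) 1 x) * hlog (drop k i) y) \<longlongrightarrow>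
       (\<Sum>k\<in>?K1. 0)) (at_left 1)"
  proof (intro tendsto_sum)
    fix k assume k: "k \<in> ?K1"
    have ne: "drop k i \<noteq> []" using k by auto
    obtain K where K: "K \<ge> 0" "\<And>y. 0 < y \<Longrightarrow> y < 1 \<Longrightarrow>
       \<bar>inner_sum (take k i) (inverse y) x - inner_sum (take k i) 1 x\<bar> \<le> K * (1 - y) / y"
      using inner_diff_bound[OF tk, of x k] x by auto
    obtain K' where K': "K' \<ge> 0" "\<And>u. 0 \<le> u \<Longrightarrow> u < 1 \<Longrightarrow> \<bar>hlog (drop k i) u\<bar> \<le> K' * u / sqrt (1 - u)"
      using hlog_bound[OF good_drop[OF gi] ne] by blast
    show "((\<lambda>y. (inner_sum (take k i) (inverse y) x - inner_sum (take k i) 1 x) * hlog (drop k i) y) \<longlongrightarrow> 0) (at_left 1)"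
    proof (rule Lim_null_comparison)
      show "eventually (\<lambda>y. norm ((inner_sum (take k i) (inverse y) x - inner_sum (take k i) 1 x) * hlog (drop k i) y)
          \<le> K * K' * sqrt (1 - y)) (at_left 1)"
        unfolding eventually_at_left_field
      proof (intro exI[of _ 0] conjI allI impI)
        fix y :: real assume y: "0 < y" "y < 1"
        have "norm ((inner_sum (take k i) (inverse y) x - inner_sum (take k i) 1 x) * hlog (drop k i) y)
          = \<bar>inner_sum (take k i) (inverse y) x - inner_sum (take k i) 1 x\<bar> * \<bar>hlog (drop k i) y\<bar>"
          by (simp add: abs_mult)
        also have "\<dots> \<le> (K * (1 - y) / y) * (K' * y / sqrt (1 - y))"
          using K(2)[OF y] K'(2)[of y] y by (intro mult_mono) auto
        also have "\<dots> = K * K' * ((1 - y) / sqrt (1 - y))" using y by (simp add: field_simps)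
        also have "(1 - y) / sqrt (1 - y) = sqrt (1 - y)" using y by (simp add: real_div_sqrt)
        finally show "norm ((inner_sum (take k i) (inverse y) x - inner_sum (take k i) 1 x) * hlog (drop k i) y)
          \<le> K * K' * sqrt (1 - y)" .
      qed simp
      have "((\<lambda>y::real. K * K' * sqrt (1 - y)) \<longlongrightarrow> K * K' * sqrt (1 - 1)) (at_left 1)"
        by (intro tendsto_intros)
      then show "((\<lambda>y::real. K * K' * sqrt (1 - y)) \<longlongrightarrow> 0) (at_left 1)" by simp
    qed
  qed
  have "((\<lambda>y. R i y x) \<longlongrightarrow> (\<Sum>k\<in>?K0. inner_sum (take k i) 1 x * hlog (drop k i) 1) + (\<Sum>k\<in>?K1. 0)) (at_left 1)"
    unfolding decomp[OF i(2)] by (rule tendsto_add[OF t0 t1])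
  moreover have "((\<lambda>y. R i y x) \<longlongrightarrow> hlog (inverse x # i) 1) (at_left 1)"
    using tendsto_cong[OF ev] lhs by simp
  ultimately show ?thesis using tendsto_unique[OF trivial_limit_at_left_real] by fastforce
qed


theorem mainTheorem1:
  fixes i :: "real list" and x y :: real
  assumes "i \<noteq> []" and "set i \<subseteq> {0, 1}" and "last i = 1"
    and "0 < x" and "x < 1" and "0 < y" and "y < 1"
  shows "hlog (inverse x # i) y =
           (\<Sum>k\<in>{0..length i}. inner_sum (take k i) (inverse y) x * hlog (drop k i) y)
         - (\<Sum>k\<in>{k. k < length i \<and> i ! k = 1}.
              inner_sum (take k i) 1 x * hlog (drop k i) y)
       \<and> hlog (inverse x # i) 1 =
           (\<Sum>k\<in>{k. k \<le> length i \<and> (k = length i \<or> i ! k = 0)}.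
              inner_sum (take k i) 1 x * hlog (drop k i) 1)"
proof
  have gi: "good i" using assms unfolding good_def by auto
  show "hlog (inverse x # i) y =
           (\<Sum>k\<in>{0..length i}. inner_sum (take k i) (inverse y) x * hlog (drop k i) y)
         - (\<Sum>k\<in>{k. k < length i \<and> i ! k = 1}.
              inner_sum (take k i) 1 x * hlog (drop k i) y)"
    using part1[OF assms(2) gi assms(6,7,4,5)] unfolding R_def S1_def S2_def .
  show "hlog (inverse x # i) 1 =
           (\<Sum>k\<in>{k. k \<le> length i \<and> (k = length i \<or> i ! k = 0)}.
              inner_sum (take k i) 1 x * hlog (drop k i) 1)"
    by (rule part2[OF assms(1,2,3,4,5)])
qed

end
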